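(* Let $t$ be a normal term, $y$ a $\lambda$-variable with $y\notin Fv(t)$, $a$ a $\mu$-variable, $\sigma=[a:=^*y]$, and $A,B,C$ types. If $\Gamma,y:A\vdash t\sigma:B;\Delta,a:C$, then $\Gamma\vdash t:B;\Delta,a:A\to C$.
   Context: $\lambda\mu$-terms: $t::= x\mid \lambda x.t\mid (t\;t)\mid \mu a.t\mid (a\;t)$ over disjoint infinite sets of $\lambda$-variables and $\mu$-variables; $Fv(t)$ is the set of free variables; a term is normal if it has no redex of the forms $(\lambda x.u\;v)$ or $(\mu b.u\;v)$. $t[a:=^*y]$ is obtained from $t$ by replacing inductively each subterm $(a\;w)$ by $(a\;(w\;y))$. Types are built from propositional variables and $\perp$ with $\to$. Typing rules for $\Gamma\vdash t:A;\Delta$: (ax) $\Gamma\vdash x:A;\Delta$ if $x:A\in\Gamma$; ($\to_i$) from $\Gamma,x:A\vdash t:B;\Delta$ infer $\Gamma\vdash\lambda x.t:A\to B;\Delta$; ($\to_e$) from $\Gamma\vdash u:A\to B;\Delta$, $\Gamma\vdash v:A;\Delta$ infer $\Gamma\vdash(u\;v):B;\Delta$; ($\mu$) from $\Gamma\vdash t:\perp;\Delta,b:A$ infer $\Gamma\vdash\mu b.t:A;\Delta$; ($\perp$) from $\Gamma\vdash t:A;\Delta,b:A$ infer $\Gamma\vdash(b\;t):\perp;\Delta,b:A$. *)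

theory Defs
  imports Main
begin

(* lambda-mu terms; lambda-variables and mu-variables are nats in separate constructors *)
datatype trm =
    Var nat
  | Lam nat trm
  | App trm trm
  | Mu nat trm
  | Named nat trm

datatype ty = Atom nat | Bot | Arr ty ty

primrec fvl :: "trm \<Rightarrow> nat set" where
  "fvl (Var x) = {x}"
| "fvl (Lam x t) = fvl t - {x}"
| "fvl (App u v) = fvl u \<union> fvl v"
| "fvl (Mu b t) = fvl t"
| "fvl (Named b t) = fvl t"

primrec avl :: "trm \<Rightarrow> nat set" where
  "avl (Var x) = {x}"
| "avl (Lam x t) = insert x (avl t)"
| "avl (App u v) = avl u \<union> avl v"
| "avl (Mu b t) = avl t"
| "avl (Named b t) = avl t"

definition swp :: "nat \<Rightarrow> nat \<Rightarrow> nat \<Rightarrow> nat" where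
  "swp x z v = (if v = x then z else if v = z then x else v)"

primrec vswap :: "nat \<Rightarrow> nat \<Rightarrow> trm \<Rightarrow> trm" where
  "vswap x z (Var v) = Var (swp x z v)"
| "vswap x z (Lam v t) = Lam (swp x z v) (vswap x z t)"
| "vswap x z (App u v) = App (vswap x z u) (vswap x z v)"
| "vswap x z (Mu b t) = Mu b (vswap x z t)"
| "vswap x z (Named b t) = Named b (vswap x z t)"

lemma size_vswap[simp]: "size (vswap x z t) = size t"
  by (induction t) auto

definition fresh_for :: "nat \<Rightarrow> trm \<Rightarrow> nat" where
  "fresh_for y t = Suc (Max (insert y (avl t)))"

(* t[a :=* y]: replace every (free) subterm (a w) by (a (w y)), capture-avoiding *)
function msubst :: "nat \<Rightarrow> nat \<Rightarrow> trm \<Rightarrow> trm" where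
  "msubst a y (Var x) = Var x"
| "msubst a y (Lam x t) =
     (if x = y then (let z = fresh_for y t in Lam z (msubst a y (vswap x z t)))
      else Lam x (msubst a y t))"
| "msubst a y (App u v) = App (msubst a y u) (msubst a y v)"
| "msubst a y (Mu b t) = (if b = a then Mu b t else Mu b (msubst a y t))"
| "msubst a y (Named b t) =
     (if b = a then Named b (App (msubst a y t) (Var y)) else Named b (msubst a y t))"
  by pat_completeness auto
termination
  by (relation "measure (\<lambda>(a, y, t). size t)") auto

fun normal :: "trm \<Rightarrow> bool" where
  "normal (Var x) = True"
| "normal (Lam x t) = normal t"
| "normal (App (Lam x u) v) = False"
| "normal (App (Mu b u) v) = False"
| "normal (App u v) = (normal u \<and> normal v)"
| "normal (Mu b t) = normal t"
| "normal (Named b t) = normal t"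

inductive typing :: "(nat \<rightharpoonup> ty) \<Rightarrow> trm \<Rightarrow> ty \<Rightarrow> (nat \<rightharpoonup> ty) \<Rightarrow> bool" where
  ax: "\<Gamma> x = Some A \<Longrightarrow> typing \<Gamma> (Var x) A \<Delta>"
| impI: "typing (\<Gamma>(x \<mapsto> A)) t B \<Delta> \<Longrightarrow> typing \<Gamma> (Lam x t) (Arr A B) \<Delta>"
| impE: "typing \<Gamma> u (Arr A B) \<Delta> \<Longrightarrow> typing \<Gamma> v A \<Delta> \<Longrightarrow> typing \<Gamma> (App u v) B \<Delta>"
| mu: "typing \<Gamma> t Bot (\<Delta>(b \<mapsto> A)) \<Longrightarrow> typing \<Gamma> (Mu b t) A \<Delta>"
| bot: "\<Delta> b = Some A \<Longrightarrow> typing \<Gamma> t A \<Delta> \<Longrightarrow> typing \<Gamma> (Named b t) Bot \<Delta>"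

end

theory Submission
  imports Defs
begin

lemma swp_swp[simp]: "swp x z (swp x z v) = v"
  by (simp add: swp_def)

lemma inj_swp: "inj (swp x z)"
  by (metis injI swp_swp)

lemma vswap_vswap[simp]: "vswap x z (vswap x z t) = t"
  by (induction t) auto

lemma fvl_vswap: "fvl (vswap x z t) = swp x z ` fvl t"
  by (induction t) (auto simp: image_set_diff[OF inj_swp])

lemma finite_avl: "finite (avl t)"
  by (induction t) auto

lemma fvl_avl: "fvl t \<subseteq> avl t"
  by (induction t) auto

lemma fresh_notin: "fresh_for y t \<notin> avl t" "fresh_for y t \<noteq> y"
proof -
  have f: "finite (insert y (avl t))" using finite_avl by simp
  show "fresh_for y t \<notin> avl t"
    using Max_ge[OF f] unfolding fresh_for_def by (metis insertCI not_less_eq_eq order_refl)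
  show "fresh_for y t \<noteq> y"
    using Max_ge[OF f] unfolding fresh_for_def by (metis insertCI not_less_eq_eq order_refl)
qed

lemma upd_swp: "(G(v \<mapsto> A)) \<circ> swp x z = (G \<circ> swp x z)(swp x z v \<mapsto> A)"
  by (auto simp: fun_eq_iff)

inductive_cases VarE: "typing G (Var x) B D"
inductive_cases LamE: "typing G (Lam x t) B D"
inductive_cases AppE: "typing G (App u v) B D"
inductive_cases MuE: "typing G (Mu b t) B D"
inductive_cases NamedE: "typing G (Named b t) B D"

lemma typing_relevant:
  "typing G t B D \<Longrightarrow> (\<forall>x\<in>fvl t. G x = G' x) \<Longrightarrow> typing G' t B D"
proof (induction arbitrary: G' rule: typing.induct)
  case ax
  then show ?case by (auto intro: typing.ax)
next
  case impI
  then show ?case by (auto intro!: typing.impI)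
next
  case impE
  then show ?case by (auto intro: typing.impE)
next
  case mu
  then show ?case by (metis fvl.simps(4) typing.mu)
next
  case bot
  then show ?case by (auto intro: typing.bot)
qed

lemma typing_swap:
  "typing G t B D \<Longrightarrow> typing (G \<circ> swp x z) (vswap x z t) B D"
proof (induction rule: typing.induct)
  case ax
  then show ?case by (auto intro: typing.ax)
next
  case (impI \<Gamma> v A t B \<Delta>)
  from impI.IH have "typing ((\<Gamma> \<circ> swp x z)(swp x z v \<mapsto> A)) (vswap x z t) B \<Delta>"
    by (simp only: upd_swp)
  then show ?case by (simp only: vswap.simps) (rule typing.impI)
next
  case impE
  then show ?case by (auto intro: typing.impE)
next
  case mu
  show ?case using mu.IH unfolding vswap.simps by (rule typing.mu)
next
  case bot
  then show ?case by (auto intro: typing.bot)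
qed

lemma main:
  "y \<notin> fvl t \<Longrightarrow> typing (\<Gamma>(y \<mapsto> A)) (msubst a y t) B (\<Delta>(a \<mapsto> C))
   \<Longrightarrow> typing \<Gamma> t B (\<Delta>(a \<mapsto> Arr A C))"
proof (induction a y t arbitrary: \<Gamma> B \<Delta> rule: msubst.induct)
  case (1 a y x)
  then show ?case by (auto elim!: VarE intro: typing.ax)
next
  case (2 a y x t)
  show ?case
  proof (cases "x = y")
    case True
    define z where "z = fresh_for y t"
    have zt: "z \<notin> avl t" "z \<noteq> y" using fresh_notin z_def by auto
    have ms: "msubst a y (Lam x t) = Lam z (msubst a y (vswap x z t))"
      using True by (simp add: z_def Let_def)
    from 2(4)[unfolded ms] obtain A' B' where B: "B = Arr A' B'"
      and T: "typing (\<Gamma>(y \<mapsto> A, z \<mapsto> A')) (msubst a y (vswap x z t)) B' (\<Delta>(a \<mapsto> C))"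
      by (elim LamE) blast
    have eqG: "\<Gamma>(y \<mapsto> A, z \<mapsto> A') = \<Gamma>(z \<mapsto> A', y \<mapsto> A)" using zt by (auto simp: fun_eq_iff)
    have yfv: "y \<notin> fvl (vswap x z t)"
      using True zt fvl_avl by (auto simp: fvl_vswap swp_def)
    have T': "typing (\<Gamma>(z \<mapsto> A', y \<mapsto> A)) (msubst a y (vswap x z t)) B' (\<Delta>(a \<mapsto> C))"
      using T by (simp only: eqG)
    have T2: "typing (\<Gamma>(z \<mapsto> A')) (vswap x z t) B' (\<Delta>(a \<mapsto> Arr A C))"
      by (rule 2(1)[OF True z_def yfv T'])
    have T3: "typing (\<Gamma>(z \<mapsto> A') \<circ> swp x z) t B' (\<Delta>(a \<mapsto> Arr A C))"
      using typing_swap[OF T2, of x z] by simp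
    have "typing (\<Gamma>(x \<mapsto> A')) t B' (\<Delta>(a \<mapsto> Arr A C))"
      apply (rule typing_relevant[OF T3])
      using zt fvl_avl True by (auto simp: swp_def)
    then show ?thesis unfolding B by (rule typing.impI)
  next
    case False
    have ms: "msubst a y (Lam x t) = Lam x (msubst a y t)" using False by simp
    from 2(4)[unfolded ms] obtain A' B' where B: "B = Arr A' B'"
      and T: "typing (\<Gamma>(y \<mapsto> A, x \<mapsto> A')) (msubst a y t) B' (\<Delta>(a \<mapsto> C))"
      by (elim LamE) blast
    have eqG: "\<Gamma>(y \<mapsto> A, x \<mapsto> A') = \<Gamma>(x \<mapsto> A', y \<mapsto> A)" using False by (auto simp: fun_eq_iff)
    have T': "typing (\<Gamma>(x \<mapsto> A', y \<mapsto> A)) (msubst a y t) B' (\<Delta>(a \<mapsto> C))"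
      using T by (simp only: eqG)
    have yfv: "y \<notin> fvl t" using 2(3) False by auto
    have "typing (\<Gamma>(x \<mapsto> A')) t B' (\<Delta>(a \<mapsto> Arr A C))"
      by (rule 2(2)[OF False yfv T'])
    then show ?thesis unfolding B by (rule typing.impI)
  qed
next
  case (3 a y u v)
  from 3(4) obtain A' where
    T1: "typing (\<Gamma>(y \<mapsto> A)) (msubst a y u) (Arr A' B) (\<Delta>(a \<mapsto> C))" and
    T2: "typing (\<Gamma>(y \<mapsto> A)) (msubst a y v) A' (\<Delta>(a \<mapsto> C))"
    unfolding msubst.simps by (elim AppE) blast
  have f: "y \<notin> fvl u" "y \<notin> fvl v" using 3(3) by auto
  show ?case using 3(1)[OF f(1) T1] 3(2)[OF f(2) T2] by (rule typing.impE)
next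
  case (4 a y b t)
  show ?case
  proof (cases "b = a")
    case True
    have ms: "msubst a y (Mu b t) = Mu b t" using True by simp
    from 4(3)[unfolded ms] have T0: "typing (\<Gamma>(y \<mapsto> A)) t Bot (\<Delta>(a \<mapsto> C, b \<mapsto> B))"
      by (elim MuE) blast
    have T: "typing (\<Gamma>(y \<mapsto> A)) t Bot (\<Delta>(a \<mapsto> Arr A C, b \<mapsto> B))"
      using T0 True by simp
    have "typing \<Gamma> t Bot (\<Delta>(a \<mapsto> Arr A C, b \<mapsto> B))"
      by (rule typing_relevant[OF T]) (use 4(2) in auto)
    then show ?thesis by (rule typing.mu)
  next
    case False
    have ms: "msubst a y (Mu b t) = Mu b (msubst a y t)" using False by simp
    from 4(3)[unfolded ms] have T0: "typing (\<Gamma>(y \<mapsto> A)) (msubst a y t) Bot (\<Delta>(a \<mapsto> C, b \<mapsto> B))"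
      by (elim MuE) blast
    have e: "\<Delta>(a \<mapsto> C, b \<mapsto> B) = \<Delta>(b \<mapsto> B, a \<mapsto> C)" "\<Delta>(a \<mapsto> Arr A C, b \<mapsto> B) = \<Delta>(b \<mapsto> B, a \<mapsto> Arr A C)"
      using False by (auto simp: fun_eq_iff)
    have T: "typing (\<Gamma>(y \<mapsto> A)) (msubst a y t) Bot (\<Delta>(b \<mapsto> B, a \<mapsto> C))"
      using T0 by (simp only: e)
    have f: "y \<notin> fvl t" using 4(2) by simp
    have "typing \<Gamma> t Bot (\<Delta>(b \<mapsto> B, a \<mapsto> Arr A C))"
      by (rule 4(1)[OF False f T])
    then have "typing \<Gamma> t Bot (\<Delta>(a \<mapsto> Arr A C, b \<mapsto> B))" by (simp only: e)
    then show ?thesis by (rule typing.mu)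
  qed
next
  case (5 a y b t)
  have f: "y \<notin> fvl t" using 5(3) by simp
  show ?case
  proof (cases "b = a")
    case True
    have ms: "msubst a y (Named b t) = Named b (App (msubst a y t) (Var y))" using True by simp
    from 5(4)[unfolded ms] obtain A' A'' where B: "B = Bot" and
      D: "(\<Delta>(a \<mapsto> C)) b = Some A''" and
      T1: "typing (\<Gamma>(y \<mapsto> A)) (msubst a y t) (Arr A' A'') (\<Delta>(a \<mapsto> C))" and
      T2: "typing (\<Gamma>(y \<mapsto> A)) (Var y) A' (\<Delta>(a \<mapsto> C))"
      by (elim NamedE AppE) blast
    from D True have "A'' = C" by simp
    moreover from T2 have "A' = A" by (elim VarE) simp
    ultimately have T1': "typing (\<Gamma>(y \<mapsto> A)) (msubst a y t) (Arr A C) (\<Delta>(a \<mapsto> C))"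
      using T1 by simp
    have "typing \<Gamma> t (Arr A C) (\<Delta>(a \<mapsto> Arr A C))" by (rule 5(1)[OF True f T1'])
    moreover have "(\<Delta>(a \<mapsto> Arr A C)) b = Some (Arr A C)" using True by simp
    ultimately show ?thesis unfolding B by (intro typing.bot)
  next
    case False
    have ms: "msubst a y (Named b t) = Named b (msubst a y t)" using False by simp
    from 5(4)[unfolded ms] obtain A' where B: "B = Bot" and
      D: "(\<Delta>(a \<mapsto> C)) b = Some A'" and
      T1: "typing (\<Gamma>(y \<mapsto> A)) (msubst a y t) A' (\<Delta>(a \<mapsto> C))"
      by (elim NamedE) blast
    have "typing \<Gamma> t A' (\<Delta>(a \<mapsto> Arr A C))" by (rule 5(2)[OF False f T1])
    moreover have "(\<Delta>(a \<mapsto> Arr A C)) b = Some A'" using D False by simp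
    ultimately show ?thesis unfolding B by (intro typing.bot)
  qed
qed

theorem mainTheorem19:
  fixes t :: trm and y a :: nat and A B C :: ty
    and \<Gamma> \<Delta> :: "nat \<rightharpoonup> ty"
  assumes "normal t"
    and "y \<notin> fvl t"
    and "typing (\<Gamma>(y \<mapsto> A)) (msubst a y t) B (\<Delta>(a \<mapsto> C))"
  shows "typing \<Gamma> t B (\<Delta>(a \<mapsto> Arr A C))"
  using main assms(2,3) by blast

end
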